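(* Let $P$ be a Poisson bracket on $\mathbb{R}^n$ and let $\odot_\nu$ be the sun-product associated with a star-product on $(\mathbb{R}^n,P)$, extended to $\mathsf{N}_\nu$ via its differential cochains. Then $\odot_\nu$ is weakly trivial: there exists an $\mathbb{R}[[\nu]]$-linear map $S_\nu=\sum_{r\ge0}\nu^rS_r:\mathsf{N}_\nu\to\mathsf{N}_\nu$ with $S_0=I$ and each $S_r$ ($r\ge1$) a differential operator on $\mathsf{N}$, such that $S_\nu(f\odot_\nu g)=fg$ for all $f,g\in\mathsf{N}$.
   Context: $\mathsf{N}=C^\infty(\mathbb{R}^n)$, coordinates $x_1,\dots,x_n$, $\mathsf{Pol}=\mathbb{R}[x_1,\dots,x_n]$, $\mathsf{N}_\nu=\mathsf{N}[[\nu]]$, $\pi:\mathsf{N}_\nu\to\mathsf{N}$ the projection onto the $\nu^0$-coefficient. A (differential) star-product on $(\mathbb{R}^n,P)$ is a bilinear map $f\ast_\nu g=\sum_{r\ge0}\nu^rC_r(f,g)$ from $\mathsf{N}\times\mathsf{N}$ to $\mathsf{N}[[\nu]]$, extended $\mathbb{R}[[\nu]]$-bilinearly, with bidifferential $C_r$ satisfying: $C_0(f,g)=fg$; $C_r(c,f)=C_r(f,c)=0$ for $r\ge1$, $c$ constant; associativity $\sum_{s+t=r}C_s(C_t(f,g),h)=\sum_{s+t=r}C_s(f,C_t(g,h))$; $C_1(f,g)-C_1(g,f)=2P(f,g)$. Its sun-product cochains $\rho_r:\mathsf{Pol}\to\mathsf{N}$ are determined by $\rho(1)=1$ and $\rho(x_{i_1}\cdots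 x_{i_k})=\frac1{k!}\sum_{\sigma\in S_k}x_{i_{\sigma(1)}}\ast_\nu\cdots\ast_\nu x_{i_{\sigma(k)}}=\sum_r\nu^r\rho_r(x_{i_1}\cdots x_{i_k})$, with $\rho_0$ the identity; the sun-product on polynomial data is $f\odot_\nu g=\rho(\pi(fg))$. Each $\rho_r$ is the restriction to $\mathsf{Pol}$ of a unique differential operator on $\mathsf{N}$ (still denoted $\rho_r$), and the sun-product is extended to $\mathsf{N}_\nu$ by $f\odot_\nu g=\pi(fg)+\sum_{r\ge1}\nu^r\rho_r(\pi(fg))$. *)

theory Defs
  imports "HOL-Analysis.Analysis" "HOL-Combinatorics.Permutations"
begin

text \<open>Functions on R^n are modelled as real^'n => real; N is the subset of smooth ones.
  Formal power series in nu with coefficients in N are sequences nat => (real^'n => real).\<close>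

type_synonym 'n fn = "real^'n \<Rightarrow> real"
type_synonym 'n ser = "nat \<Rightarrow> 'n fn"

definition pd :: "'n::finite \<Rightarrow> 'n fn \<Rightarrow> 'n fn" where
  "pd i f = (\<lambda>x. deriv (\<lambda>t. f (x + t *\<^sub>R axis i 1)) 0)"

fun iter_pd :: "'n::finite list \<Rightarrow> 'n fn \<Rightarrow> 'n fn" where
  "iter_pd [] f = f"
| "iter_pd (i # is) f = pd i (iter_pd is f)"

definition smooth :: "'n::finite fn \<Rightarrow> bool" where
  "smooth f \<longleftrightarrow> (\<forall>is x. iter_pd is f differentiable (at x))"

definition diff_op :: "('n::finite fn \<Rightarrow> 'n fn) \<Rightarrow> bool" where
  "diff_op D \<longleftrightarrow> (\<exists>k a. (\<forall>is. smooth (a is)) \<and>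
     (\<forall>f. smooth f \<longrightarrow> D f = (\<lambda>x. \<Sum>is\<in>{is::'n list. length is \<le> k}. a is x * iter_pd is f x)))"

definition bidiff_op :: "('n::finite fn \<Rightarrow> 'n fn \<Rightarrow> 'n fn) \<Rightarrow> bool" where
  "bidiff_op B \<longleftrightarrow> (\<exists>k a. (\<forall>is js. smooth (a is js)) \<and>
     (\<forall>f g. smooth f \<longrightarrow> smooth g \<longrightarrow> B f g = (\<lambda>x.
        \<Sum>is\<in>{is::'n list. length is \<le> k}. \<Sum>js\<in>{js::'n list. length js \<le> k}.
          a is js x * iter_pd is f x * iter_pd js g x)))"

definition poisson_bracket :: "('n::finite fn \<Rightarrow> 'n fn \<Rightarrow> 'n fn) \<Rightarrow> bool" where
  "poisson_bracket P \<longleftrightarrow>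
     (\<exists>\<pi>. (\<forall>i j. smooth (\<pi> i j)) \<and> (\<forall>i j x. \<pi> i j x = - \<pi> j i x) \<and>
        (\<forall>f g. smooth f \<longrightarrow> smooth g \<longrightarrow>
           P f g = (\<lambda>x. \<Sum>i\<in>UNIV. \<Sum>j\<in>UNIV. \<pi> i j x * pd i f x * pd j g x))) \<and>
     (\<forall>f g h. smooth f \<longrightarrow> smooth g \<longrightarrow> smooth h \<longrightarrow>
        (\<forall>x. P f (P g h) x + P g (P h f) x + P h (P f g) x = 0))"

text \<open>Differential star-product f *_nu g = sum nu^r C_r(f,g) on (R^n, P).\<close>
definition star_product :: "('n::finite fn \<Rightarrow> 'n fn \<Rightarrow> 'n fn) \<Rightarrow> (nat \<Rightarrow> 'n fn \<Rightarrow> 'n fn \<Rightarrow> 'n fn) \<Rightarrow> bool" where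
  "star_product P C \<longleftrightarrow>
     (\<forall>r. bidiff_op (C r)) \<and>
     (\<forall>f g. smooth f \<longrightarrow> smooth g \<longrightarrow> C 0 f g = (\<lambda>x. f x * g x)) \<and>
     (\<forall>r f c. r \<ge> 1 \<longrightarrow> smooth f \<longrightarrow> C r (\<lambda>_. c) f = (\<lambda>_. 0) \<and> C r f (\<lambda>_. c) = (\<lambda>_. 0)) \<and>
     (\<forall>r f g h. smooth f \<longrightarrow> smooth g \<longrightarrow> smooth h \<longrightarrow>
        (\<lambda>x. \<Sum>s\<le>r. C s (C (r - s) f g) h x) = (\<lambda>x. \<Sum>s\<le>r. C s f (C (r - s) g h) x)) \<and>
     (\<forall>f g. smooth f \<longrightarrow> smooth g \<longrightarrow> (\<forall>x. C 1 f g x - C 1 g f x = 2 * P f g x))"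

definition star_ser :: "(nat \<Rightarrow> 'n fn \<Rightarrow> 'n fn \<Rightarrow> 'n fn) \<Rightarrow> 'n ser \<Rightarrow> 'n ser \<Rightarrow> 'n ser" where
  "star_ser C F G = (\<lambda>r x. \<Sum>s\<le>r. \<Sum>t\<le>r - s. C s (F t) (G (r - s - t)) x)"

definition coord_ser :: "'n::finite \<Rightarrow> 'n ser" where
  "coord_ser i = (\<lambda>r x. if r = 0 then x $ i else 0)"

definition unit_ser :: "'n ser" where
  "unit_ser = (\<lambda>r x. if r = 0 then 1 else 0)"

text \<open>x_{i1} * ... * x_{ik} (star products, bracketed to the right; associativity makes this irrelevant).\<close>
fun star_list :: "(nat \<Rightarrow> 'n::finite fn \<Rightarrow> 'n fn \<Rightarrow> 'n fn) \<Rightarrow> 'n list \<Rightarrow> 'n ser" where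
  "star_list C [] = unit_ser"
| "star_list C (i # is) = star_ser C (coord_ser i) (star_list C is)"

definition monomial :: "'n::finite list \<Rightarrow> 'n fn" where
  "monomial is = (\<lambda>x. prod_list (map (\<lambda>i. x $ i) is))"

definition sym_star :: "(nat \<Rightarrow> 'n::finite fn \<Rightarrow> 'n fn \<Rightarrow> 'n fn) \<Rightarrow> 'n list \<Rightarrow> 'n ser" where
  "sym_star C is = (\<lambda>r x. (1 / fact (length is)) *
     (\<Sum>\<sigma>\<in>{\<sigma>. \<sigma> permutes {..<length is}}.
        star_list C (map (\<lambda>j. is ! \<sigma> j) [0..<length is]) r x))"

text \<open>rho is the family of sun-product cochains of the star product C: each rho_r is a
  differential operator on N whose restriction to polynomials is the coefficient of nu^r in
  the symmetrized star product of the coordinates.\<close>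
definition sun_cochains :: "(nat \<Rightarrow> 'n::finite fn \<Rightarrow> 'n fn \<Rightarrow> 'n fn) \<Rightarrow> (nat \<Rightarrow> 'n fn \<Rightarrow> 'n fn) \<Rightarrow> bool" where
  "sun_cochains C \<rho> \<longleftrightarrow> (\<forall>r. diff_op (\<rho> r)) \<and> (\<forall>r is. \<rho> r (monomial is) = sym_star C is r)"

definition sun :: "(nat \<Rightarrow> 'n fn \<Rightarrow> 'n fn) \<Rightarrow> 'n fn \<Rightarrow> 'n fn \<Rightarrow> 'n ser" where
  "sun \<rho> f g = (\<lambda>r. if r = 0 then (\<lambda>x. f x * g x) else \<rho> r (\<lambda>x. f x * g x))"

definition apply_ser :: "(nat \<Rightarrow> 'n fn \<Rightarrow> 'n fn) \<Rightarrow> 'n ser \<Rightarrow> 'n ser" where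
  "apply_ser S F = (\<lambda>r x. \<Sum>s\<le>r. S s (F (r - s)) x)"

end

theory Submission
  imports Defs
begin

lemma iter_pd_append: "iter_pd (is @ js) f = iter_pd is (iter_pd js f)"
  by (induction "is") auto

lemma smooth_diff: "smooth f \<Longrightarrow> f differentiable (at x)"
  unfolding smooth_def by (metis iter_pd.simps(1))

lemma smooth_iter: "smooth f \<Longrightarrow> smooth (iter_pd js f)"
  unfolding smooth_def by (metis iter_pd_append)

lemma smooth_pd: "smooth f \<Longrightarrow> smooth (pd i f)"
  using smooth_iter[of f "[i]"] by simp

lemma pd_DERIV:
  fixes f :: "'n::finite fn"
  assumes "f differentiable (at x)"
  shows "((\<lambda>t. f (x + t *\<^sub>R axis i 1)) has_real_derivative pd i f x) (at 0)"
proof -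
  have "(\<lambda>t::real. x + t *\<^sub>R axis i 1) differentiable (at 0)"
    by (intro derivative_intros)
  moreover have "f differentiable (at ((\<lambda>t::real. x + t *\<^sub>R axis i 1) 0))"
    using assms by simp
  ultimately have "(f \<circ> (\<lambda>t::real. x + t *\<^sub>R axis i 1)) differentiable (at 0)"
    by (rule differentiable_chain_at)
  hence "(\<lambda>t. f (x + t *\<^sub>R axis i 1)) differentiable (at 0)" by (simp add: o_def)
  thus ?thesis unfolding pd_def DERIV_deriv_iff_real_differentiable[symmetric] by simp
qed

lemma pd_add:
  fixes f g :: "'n::finite fn"
  assumes "\<And>x. f differentiable (at x)" "\<And>x. g differentiable (at x)"
  shows "pd i (\<lambda>x. f x + g x) = (\<lambda>x. pd i f x + pd i g x)"
proof
  fix x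
  have "((\<lambda>t. f (x + t *\<^sub>R axis i 1) + g (x + t *\<^sub>R axis i 1)) has_real_derivative pd i f x + pd i g x) (at 0)"
    using pd_DERIV[OF assms(1)] pd_DERIV[OF assms(2)] by (rule DERIV_add)
  thus "pd i (\<lambda>x. f x + g x) x = pd i f x + pd i g x"
    unfolding pd_def[of i "\<lambda>x. f x + g x"] by (rule DERIV_imp_deriv)
qed

lemma pd_mult:
  fixes f g :: "'n::finite fn"
  assumes "\<And>x. f differentiable (at x)" "\<And>x. g differentiable (at x)"
  shows "pd i (\<lambda>x. f x * g x) = (\<lambda>x. pd i f x * g x + f x * pd i g x)"
proof
  fix x
  have "((\<lambda>t. f (x + t *\<^sub>R axis i 1) * g (x + t *\<^sub>R axis i 1)) has_real_derivative pd i f x * g (x + 0 *\<^sub>R axis i 1) + pd i g x * f (x + 0 *\<^sub>R axis i 1)) (at 0)"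
    using pd_DERIV[OF assms(1)] pd_DERIV[OF assms(2)] by (rule DERIV_mult)
  thus "pd i (\<lambda>x. f x * g x) x = pd i f x * g x + f x * pd i g x"
    unfolding pd_def[of i "\<lambda>x. f x * g x"] by (simp add: DERIV_imp_deriv)
qed

lemma pd_const: "pd i (\<lambda>_. k) = (\<lambda>_. 0)"
  unfolding pd_def by (simp add: DERIV_imp_deriv)

lemma iter_pd_const: "iter_pd is (\<lambda>_. k) = (if is = [] then (\<lambda>_. k) else (\<lambda>_. 0))"
  by (induction "is") (auto simp: pd_const)

lemma smooth_const: "smooth (\<lambda>_. k)"
  unfolding smooth_def by (simp add: iter_pd_const)

definition rep :: "('n::finite fn \<times> 'n list) list \<Rightarrow> 'n fn \<Rightarrow> 'n fn" where
  "rep L h = (\<lambda>x. sum_list (map (\<lambda>(c, is). c x * iter_pd is h x) L))"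

definition okL :: "('n::finite fn \<times> 'n list) list \<Rightarrow> bool" where
  "okL L \<longleftrightarrow> (\<forall>(c, is)\<in>set L. smooth c)"

lemma rep_Nil[simp]: "rep [] h = (\<lambda>x. 0)" by (simp add: rep_def)
lemma rep_Cons: "rep ((c, is) # L) h = (\<lambda>x. c x * iter_pd is h x + rep L h x)"
  by (simp add: rep_def)
lemma rep_append: "rep (L1 @ L2) h x = rep L1 h x + rep L2 h x"
  by (simp add: rep_def)

lemma rep_diff: "okL L \<Longrightarrow> smooth h \<Longrightarrow> rep L h differentiable (at x)"
proof (induction L)
  case Nil then show ?case by simp
next
  case (Cons a L)
  obtain c "is" where a: "a = (c, is)" by fastforce
  have "smooth c" using Cons.prems a by (auto simp: okL_def)
  moreover have "okL L" using Cons.prems by (auto simp: okL_def)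
  ultimately have "c differentiable (at x)" "iter_pd is h differentiable (at x)" "rep L h differentiable (at x)"
    using Cons by (auto intro: smooth_diff smooth_iter)
  then show ?case using a
    by (simp add: rep_Cons)
qed

definition pdL :: "'n::finite \<Rightarrow> ('n fn \<times> 'n list) list \<Rightarrow> ('n fn \<times> 'n list) list" where
  "pdL j L = concat (map (\<lambda>(c, is). [(pd j c, is), (c, j # is)]) L)"

lemma okL_pdL: "okL L \<Longrightarrow> okL (pdL j L)"
  by (auto simp: okL_def pdL_def smooth_pd)

lemma pd_rep: "okL L \<Longrightarrow> smooth h \<Longrightarrow> pd j (rep L h) = rep (pdL j L) h"
proof (induction L)
  case Nil then show ?case by (simp add: pdL_def pd_const)
next
  case (Cons a L)
  obtain c "is" where a: "a = (c, is)" by fastforce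
  have c: "smooth c" using Cons.prems a by (auto simp: okL_def)
  have L: "okL L" using Cons.prems by (auto simp: okL_def)
  have "pd j (rep (a # L) h) = pd j (\<lambda>x. c x * iter_pd is h x + rep L h x)"
    by (simp add: a rep_Cons)
  also have "\<dots> = (\<lambda>x. pd j (\<lambda>x. c x * iter_pd is h x) x + pd j (rep L h) x)"
    using c L Cons.prems
    by (intro pd_add differentiable_mult) (auto intro: smooth_diff smooth_iter rep_diff)
  also have "\<dots> = (\<lambda>x. pd j c x * iter_pd is h x + c x * iter_pd (j # is) h x + rep (pdL j L) h x)"
    using c L Cons
    by (subst pd_mult) (auto simp: mult.commute intro!: smooth_diff smooth_iter)
  also have "\<dots> = rep (pdL j (a # L)) h"
    by (simp add: a pdL_def rep_def add.assoc)
  finally show ?case .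
qed

fun iterL :: "'n::finite list \<Rightarrow> ('n fn \<times> 'n list) list \<Rightarrow> ('n fn \<times> 'n list) list" where
  "iterL [] L = L"
| "iterL (j # js) L = pdL j (iterL js L)"

lemma okL_iterL: "okL L \<Longrightarrow> okL (iterL js L)"
  by (induction js) (auto simp: okL_pdL)

lemma iter_pd_rep: "okL L \<Longrightarrow> smooth h \<Longrightarrow> iter_pd js (rep L h) = rep (iterL js L) h"
  by (induction js) (auto simp: pd_rep okL_iterL)

lemma smooth_rep: "okL L \<Longrightarrow> smooth h \<Longrightarrow> smooth (rep L h)"
  unfolding smooth_def[of "rep L h"]
  by (auto simp: iter_pd_rep intro!: rep_diff okL_iterL)

lemma smooth_mult: "smooth a \<Longrightarrow> smooth c \<Longrightarrow> smooth (\<lambda>x. a x * c x)"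
proof -
  assume "smooth a" "smooth c"
  hence "smooth (rep [(a, [])] c)" by (intro smooth_rep) (auto simp: okL_def)
  moreover have "rep [(a, [])] c = (\<lambda>x. a x * c x)" by (simp add: rep_def)
  ultimately show ?thesis by simp
qed

definition lrep :: "('n::finite fn \<Rightarrow> 'n fn) \<Rightarrow> bool" where
  "lrep D \<longleftrightarrow> (\<exists>L. okL L \<and> (\<forall>h. smooth h \<longrightarrow> D h = rep L h))"

definition mulL :: "'n::finite fn \<Rightarrow> ('n fn \<times> 'n list) list \<Rightarrow> ('n fn \<times> 'n list) list" where
  "mulL a M = map (\<lambda>(c, is). (\<lambda>x. a x * c x, is)) M"

lemma rep_mulL: "rep (mulL a M) h x = a x * rep M h x"
  by (induction M) (auto simp: mulL_def rep_def algebra_simps)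

lemma okL_mulL: "smooth a \<Longrightarrow> okL M \<Longrightarrow> okL (mulL a M)"
  by (auto simp: okL_def mulL_def smooth_mult)

lemma okL_append: "okL (L1 @ L2) \<longleftrightarrow> okL L1 \<and> okL L2"
  by (auto simp: okL_def)

lemma lrep_id: "lrep (\<lambda>h. h)"
  unfolding lrep_def
  by (rule exI[of _ "[(\<lambda>_. 1, [])]"]) (auto simp: okL_def rep_def smooth_const)

lemma lrep_comp:
  fixes D E :: "'n::finite fn \<Rightarrow> 'n fn"
  assumes "lrep D" "lrep E"
  shows "lrep (\<lambda>h. D (E h))"
proof -
  obtain LD where LD: "okL LD" "\<And>h. smooth h \<Longrightarrow> D h = rep LD h"
    using assms(1) by (auto simp: lrep_def)
  obtain LE where LE: "okL LE" "\<And>h. smooth h \<Longrightarrow> E h = rep LE h"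
    using assms(2) by (auto simp: lrep_def)
  define F where "F L = concat (map (\<lambda>(a, js). mulL a (iterL js LE)) L)" for L
  have okF: "okL L \<Longrightarrow> okL (F L)" for L
  proof (induction L)
    case Nil then show ?case by (simp add: F_def okL_def)
  next
    case (Cons a L)
    obtain c "is" where a: "a = (c, is)" by fastforce
    have "okL L" "smooth c" using Cons.prems a by (auto simp: okL_def)
    then show ?case using Cons.IH a
      by (simp add: F_def okL_append okL_mulL okL_iterL LE(1))
  qed
  have repF: "okL L \<Longrightarrow> smooth h \<Longrightarrow> rep (F L) h = rep L (rep LE h)" for L h
  proof (induction L)
    case Nil then show ?case by (simp add: F_def)
  next
    case (Cons a L)
    obtain c "is" where a: "a = (c, is)" by fastforce
    have "okL L" using Cons.prems by (auto simp: okL_def)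
    then show ?case using Cons a
      by (auto simp: F_def rep_append rep_mulL iter_pd_rep LE(1) rep_Cons fun_eq_iff)
  qed
  show ?thesis unfolding lrep_def
  proof (intro exI conjI allI impI)
    show "okL (F LD)" by (rule okF[OF LD(1)])
    fix h :: "'n fn" assume h: "smooth h"
    have "smooth (E h)" using h LE by (simp add: smooth_rep)
    then show "D (E h) = rep (F LD) h" using LD LE h repF by simp
  qed
qed

lemma lrep_neg: "lrep D \<Longrightarrow> lrep (\<lambda>h x. - D h x)"
  unfolding lrep_def
proof (elim exE conjE)
  fix L assume L: "okL L" "\<forall>h. smooth h \<longrightarrow> D h = rep L h"
  show "\<exists>L. okL L \<and> (\<forall>h. smooth h \<longrightarrow> (\<lambda>x. - D h x) = rep L h)"
    by (rule exI[of _ "mulL (\<lambda>_. -1) L"]) (auto simp: L okL_mulL smooth_const rep_mulL fun_eq_iff)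
qed

lemma lrep_sum:
  fixes D :: "'b \<Rightarrow> 'n::finite fn \<Rightarrow> 'n fn"
  assumes "finite A" "\<forall>s\<in>A. lrep (D s)"
  shows "lrep (\<lambda>h x. \<Sum>s\<in>A. D s h x)"
  using assms
proof (induction A rule: finite_induct)
  case empty
  show ?case unfolding lrep_def by (rule exI[of _ "[]"]) (auto simp: okL_def)
next
  case (insert a A)
  obtain L1 where L1: "okL L1" "\<forall>h. smooth h \<longrightarrow> D a h = rep L1 h"
    using insert.prems by (auto simp: lrep_def)
  obtain L2 where L2: "okL L2" "\<forall>h. smooth h \<longrightarrow> (\<lambda>x. \<Sum>s\<in>A. D s h x) = rep L2 h"
    using insert by (auto simp: lrep_def)
  show ?case unfolding lrep_def
  proof (intro exI[of _ "L1 @ L2"] conjI allI impI)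
    show "okL (L1 @ L2)" using L1 L2 by (simp add: okL_append)
    fix h :: "'n fn" assume "smooth h"
    then show "(\<lambda>x. \<Sum>s\<in>insert a A. D s h x) = rep (L1 @ L2) h"
      using L1 L2 insert.hyps by (auto simp: fun_eq_iff rep_append dest: fun_cong)
  qed
qed

lemma finite_Ik: "finite {is::'n::finite list. length is \<le> k}"
  using finite_lists_length_le[of "UNIV :: 'n set" k] by simp

lemma diff_op_lrep:
  fixes D :: "'n::finite fn \<Rightarrow> 'n fn"
  assumes "diff_op D" shows "lrep D"
proof -
  obtain k a where a: "\<forall>is. smooth (a is)"
    "\<forall>f. smooth f \<longrightarrow> D f = (\<lambda>x. \<Sum>is\<in>{is::'n list. length is \<le> k}. a is x * iter_pd is f x)"
    using assms unfolding diff_op_def by blast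
  obtain xs where xs: "set xs = {is::'n list. length is \<le> k}" "distinct xs"
    using finite_distinct_list[OF finite_Ik] by blast
  show ?thesis unfolding lrep_def
  proof (intro exI[of _ "map (\<lambda>is. (a is, is)) xs"] conjI allI impI)
    show "okL (map (\<lambda>is. (a is, is)) xs)" using a by (auto simp: okL_def)
    fix h :: "'n fn" assume "smooth h"
    then show "D h = rep (map (\<lambda>is. (a is, is)) xs) h"
      using a xs by (simp add: rep_def o_def sum_list_distinct_conv_sum_set)
  qed
qed

lemma sum_coeff_lemma:
  fixes F :: "'n list \<Rightarrow> real"
  assumes "finite I" "\<forall>(c, js)\<in>set L. js \<in> I"
  shows "(\<Sum>is\<in>I. (\<Sum>(c, js)\<leftarrow>L. if js = is then c x else 0) * F is) = (\<Sum>(c, js)\<leftarrow>L. c x * F js)"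
  using assms(2)
proof (induction L)
  case Nil then show ?case by simp
next
  case (Cons p L)
  obtain c js where p: "p = (c, js)" by fastforce
  have js: "js \<in> I" using Cons.prems p by auto
  have "(\<Sum>is\<in>I. (\<Sum>(c, js)\<leftarrow>p # L. if js = is then c x else 0) * F is)
     = (\<Sum>is\<in>I. (if js = is then c x * F is else 0)) + (\<Sum>is\<in>I. (\<Sum>(c, js)\<leftarrow>L. if js = is then c x else 0) * F is)"
    unfolding sum.distrib[symmetric] by (rule sum.cong) (auto simp: p distrib_right)
  also have "\<dots> = c x * F js + (\<Sum>(c, js)\<leftarrow>L. c x * F js)"
    using Cons js assms(1) by (simp add: sum.delta)
  finally show ?case by (simp add: p)
qed

lemma smooth_if: "smooth c \<Longrightarrow> smooth (\<lambda>x. if P then c x else 0)"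
  by (cases P) (simp_all add: smooth_const)

lemma lrep_diff_op:
  fixes D :: "'n::finite fn \<Rightarrow> 'n fn"
  assumes "lrep D" shows "diff_op D"
proof -
  obtain L where L: "okL L" "\<And>h. smooth h \<Longrightarrow> D h = rep L h"
    using assms by (auto simp: lrep_def)
  define k where "k = Max (insert 0 (length ` snd ` set L))"
  define a where "a is = (\<lambda>x. \<Sum>(c, js)\<leftarrow>L. if js = is then c x else 0)" for "is"
  have kb: "\<forall>(c, js)\<in>set L. js \<in> {is::'n list. length is \<le> k}"
    unfolding k_def by (auto intro!: Max_ge simp: image_iff) (metis snd_conv)
  have sm: "smooth (a is)" for "is"
  proof -
    define M where "M = map (\<lambda>(c, js). (\<lambda>x. if js = is then c x else 0, [] :: 'n list)) L"
    have "okL M" using L(1) by (auto simp: okL_def M_def smooth_if)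
    hence "smooth (rep M (\<lambda>_. 1))" by (intro smooth_rep smooth_const)
    moreover have "rep M (\<lambda>_. 1) = a is"
      unfolding M_def a_def rep_def by (simp add: o_def case_prod_unfold)
    ultimately show ?thesis by simp
  qed
  show ?thesis unfolding diff_op_def
  proof (rule exI[of _ k], rule exI[of _ a], intro conjI allI impI)
    show "smooth (a is)" for "is" using sm by blast
    fix f :: "'n fn" assume "smooth f"
    then show "D f = (\<lambda>x. \<Sum>is\<in>{is. length is \<le> k}. a is x * iter_pd is f x)"
      using L(2) sum_coeff_lemma[OF finite_Ik kb] by (simp add: a_def rep_def fun_eq_iff)
  qed
qed

function Sop :: "(nat \<Rightarrow> 'n::finite fn \<Rightarrow> 'n fn) \<Rightarrow> nat \<Rightarrow> 'n fn \<Rightarrow> 'n fn" where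
  "Sop \<rho> r h = (if r = 0 then h else (\<lambda>x. - (\<Sum>s\<in>{..<r}. Sop \<rho> s (\<rho> (r - s) h) x)))"
  by pat_completeness auto
termination by (relation "Wellfounded.measure (\<lambda>(\<rho>, r, h). r)") auto

declare Sop.simps[simp del]

lemma lrep_Sop:
  assumes "\<forall>r. diff_op (\<rho> r)"
  shows "lrep (Sop \<rho> r)"
proof (induction r rule: less_induct)
  case (less r)
  show ?case
  proof (cases "r = 0")
    case True
    have "Sop \<rho> r = (\<lambda>h. h)" by (rule ext, subst Sop.simps) (simp add: True)
    then show ?thesis using lrep_id by simp
  next
    case False
    have "lrep (\<lambda>h x. - (\<Sum>s\<in>{..<r}. Sop \<rho> s (\<rho> (r - s) h) x))"
    proof (rule lrep_neg, rule lrep_sum, simp, rule ballI)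
      fix s assume "s \<in> {..<r}"
      hence "lrep (Sop \<rho> s)" using less by simp
      moreover have "lrep (\<rho> (r - s))" using assms diff_op_lrep by blast
      ultimately show "lrep (\<lambda>h. Sop \<rho> s (\<rho> (r - s) h))" by (rule lrep_comp)
    qed
    moreover have "Sop \<rho> r = (\<lambda>h x. - (\<Sum>s\<in>{..<r}. Sop \<rho> s (\<rho> (r - s) h) x))"
      using False by (intro ext, subst Sop.simps) simp
    ultimately show ?thesis by simp
  qed
qed

theorem corollary4:
  fixes P :: "('n::finite) fn \<Rightarrow> 'n fn \<Rightarrow> 'n fn"
    and C :: "nat \<Rightarrow> 'n fn \<Rightarrow> 'n fn \<Rightarrow> 'n fn"
    and \<rho> :: "nat \<Rightarrow> 'n fn \<Rightarrow> 'n fn"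
  assumes "poisson_bracket P"
    and "star_product P C"
    and "sun_cochains C \<rho>"
  shows "\<exists>S :: nat \<Rightarrow> 'n fn \<Rightarrow> 'n fn.
           (\<forall>f. smooth f \<longrightarrow> S 0 f = f) \<and>
           (\<forall>r\<ge>1. diff_op (S r)) \<and>
           (\<forall>f g. smooth f \<longrightarrow> smooth g \<longrightarrow>
              apply_ser S (sun \<rho> f g) = (\<lambda>r x. if r = 0 then f x * g x else 0))"
proof (intro exI[of _ "Sop \<rho>"] conjI allI impI)
  have d: "\<forall>r. diff_op (\<rho> r)" using assms(3) by (simp add: sun_cochains_def)
  show "Sop \<rho> 0 f = f" for f by (subst Sop.simps) simp
  show "diff_op (Sop \<rho> r)" for r by (rule lrep_diff_op[OF lrep_Sop[OF d]])
  fix f g :: "'n fn"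
  show "apply_ser (Sop \<rho>) (sun \<rho> f g) = (\<lambda>r x. if r = 0 then f x * g x else 0)"
  proof (intro ext)
    fix r x
    show "apply_ser (Sop \<rho>) (sun \<rho> f g) r x = (if r = 0 then f x * g x else 0)"
    proof (cases r)
      case 0 then show ?thesis by (simp add: apply_ser_def sun_def, subst Sop.simps) simp
    next
      case (Suc m)
      have "apply_ser (Sop \<rho>) (sun \<rho> f g) r x
          = (\<Sum>s<r. Sop \<rho> s (\<rho> (r - s) (\<lambda>x. f x * g x)) x) + Sop \<rho> r (\<lambda>x. f x * g x) x"
        unfolding apply_ser_def Suc lessThan_Suc_atMost[symmetric] sum.lessThan_Suc
        by (simp add: sun_def)
      also have "\<dots> = 0" using Suc by (subst (2) Sop.simps) simp
      finally show ?thesis using Suc by simp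
    qed
  qed
qed

end
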